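(* Let $p\ge1$ and $\nu\in\mathcal{W}_p(\mathbb{R}^d)$. Then the closure of $\mathcal{Q}_\infty(\nu)$ in $\mathcal{W}_p(\mathbb{R}^d)$ equals $$\mathcal{S}_p(\nu)=\{\mu\in\mathcal{W}_p(\mathbb{R}^d):\operatorname{supp}\mu\subset\operatorname{supp}\nu\}.$$
   Context: $\mathcal{W}_p(\mathbb{R}^d)$ is the space of Borel probability measures on $\mathbb{R}^d$ with finite $p$-th moment, equipped with the Wasserstein metric $W_p(\mu,\nu)=\big(\inf_{\gamma\in\Pi(\mu,\nu)}\int|x-y|^p\,d\gamma\big)^{1/p}$, where $\Pi(\mu,\nu)$ is the set of couplings of $\mu$ and $\nu$. $\mathcal{Q}_\infty(\nu)$ is the set of Borel probability measures $\mu\ll\nu$ with $d\mu/d\nu$ bounded. $\operatorname{supp}$ denotes the support (smallest closed set of full measure). *)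

theory Defs
  imports "HOL-Probability.Probability"
begin

definition Wspace :: "real \<Rightarrow> 'a::euclidean_space measure set" where
  "Wspace p = {\<mu>. sets \<mu> = sets borel \<and> prob_space \<mu> \<and>
                  (\<integral>\<^sup>+ x. ennreal (norm x powr p) \<partial>\<mu>) < \<infinity>}"

definition couplings :: "'a::euclidean_space measure \<Rightarrow> 'a measure \<Rightarrow> ('a \<times> 'a) measure set" where
  "couplings \<mu> \<nu> = {\<gamma>. sets \<gamma> = sets borel \<and> prob_space \<gamma> \<and>
                        distr \<gamma> borel fst = \<mu> \<and> distr \<gamma> borel snd = \<nu>}"

definition Wdist :: "real \<Rightarrow> 'a::euclidean_space measure \<Rightarrow> 'a measure \<Rightarrow> real" where
  "Wdist p \<mu> \<nu> = enn2real (INF \<gamma>\<in>couplings \<mu> \<nu>. \<integral>\<^sup>+ z. ennreal (norm (fst z - snd z) powr p) \<partial>\<gamma>)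
                   powr (1 / p)"

definition Wclosure :: "real \<Rightarrow> 'a::euclidean_space measure set \<Rightarrow> 'a measure set" where
  "Wclosure p A = {\<mu> \<in> Wspace p. \<forall>e>0. \<exists>q\<in>A \<inter> Wspace p. Wdist p q \<mu> < e}"

definition supp :: "'a::euclidean_space measure \<Rightarrow> 'a set" where
  "supp \<mu> = \<Inter> {C. closed C \<and> emeasure \<mu> (space \<mu> - C) = 0}"

definition Qinf :: "'a::euclidean_space measure \<Rightarrow> 'a measure set" where
  "Qinf \<nu> = {\<mu>. prob_space \<mu> \<and> (\<exists>f \<in> borel_measurable borel. (\<exists>C::real. \<forall>x. f x \<le> ennreal C)
                 \<and> \<mu> = density \<nu> f)}"

end

theory Submission
  imports Defs
begin


lemma sets_pair_borel:
  assumes "sets N = sets (borel::'a::euclidean_space measure)" "sets M = sets (borel::'b::euclidean_space measure)"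
  shows "sets (N \<Otimes>\<^sub>M M) = sets (borel :: ('a \<times> 'b) measure)"
proof -
  have "sets (N \<Otimes>\<^sub>M M) = sets (borel \<Otimes>\<^sub>M borel :: ('a \<times> 'b) measure)"
    using assms by (intro sets_pair_measure_cong) auto
  also have "\<dots> = sets (borel :: ('a \<times> 'b) measure)" by (subst borel_prod) (rule refl)
  finally show ?thesis .
qed

lemma marg_fst:
  assumes sM: "sigma_finite_measure M" and sN: "sigma_finite_measure N"
    and g: "g \<in> borel_measurable (M \<Otimes>\<^sub>M N)"
  shows "distr (density (M \<Otimes>\<^sub>M N) g) M fst = density M (\<lambda>x. \<integral>\<^sup>+y. g (x,y) \<partial>N)"
proof (rule measure_eqI)
  interpret N: sigma_finite_measure N by fact
  show "sets (distr (density (M \<Otimes>\<^sub>M N) g) M fst) = sets (density M (\<lambda>x. \<integral>\<^sup>+y. g (x,y) \<partial>N))" by simp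
  fix A assume A: "A \<in> sets (distr (density (M \<Otimes>\<^sub>M N) g) M fst)"
  then have A': "A \<in> sets M" by simp
  have mf: "fst \<in> measurable (density (M \<Otimes>\<^sub>M N) g) M"
    by (simp add: measurable_fst)
  have "emeasure (distr (density (M \<Otimes>\<^sub>M N) g) M fst) A
      = emeasure (density (M \<Otimes>\<^sub>M N) g) (fst -` A \<inter> space (M \<Otimes>\<^sub>M N))"
    using A' mf by (simp add: emeasure_distr)
  also have "fst -` A \<inter> space (M \<Otimes>\<^sub>M N) = A \<times> space N"
    using A' sets.sets_into_space[OF A'] by (auto simp: space_pair_measure)
  also have "emeasure (density (M \<Otimes>\<^sub>M N) g) (A \<times> space N) = (\<integral>\<^sup>+z. g z * indicator (A \<times> space N) z \<partial>(M \<Otimes>\<^sub>M N))"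
    using A' g by (subst emeasure_density) auto
  also have "\<dots> = (\<integral>\<^sup>+x. \<integral>\<^sup>+y. g (x,y) * indicator (A \<times> space N) (x,y) \<partial>N \<partial>M)"
    using A' g by (subst N.nn_integral_fst[symmetric]) auto
  also have "\<dots> = (\<integral>\<^sup>+x. (\<integral>\<^sup>+y. g (x,y) \<partial>N) * indicator A x \<partial>M)"
  proof (rule nn_integral_cong)
    fix x assume "x \<in> space M"
    have "(\<integral>\<^sup>+y. g (x,y) * indicator (A \<times> space N) (x,y) \<partial>N) = (\<integral>\<^sup>+y. g (x,y) * indicator A x \<partial>N)"
      by (rule nn_integral_cong) (auto simp: indicator_def)
    also have "\<dots> = (\<integral>\<^sup>+y. g (x,y) \<partial>N) * indicator A x"
      using g \<open>x \<in> space M\<close> by (subst nn_integral_multc) auto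
    finally show "(\<integral>\<^sup>+y. g (x,y) * indicator (A \<times> space N) (x,y) \<partial>N) = (\<integral>\<^sup>+y. g (x,y) \<partial>N) * indicator A x" .
  qed
  also have "\<dots> = emeasure (density M (\<lambda>x. \<integral>\<^sup>+y. g (x,y) \<partial>N)) A"
    using A' g by (subst emeasure_density) auto
  finally show "emeasure (distr (density (M \<Otimes>\<^sub>M N) g) M fst) A = emeasure (density M (\<lambda>x. \<integral>\<^sup>+y. g (x,y) \<partial>N)) A" .
qed

lemma marg_snd:
  assumes sM: "sigma_finite_measure M" and sN: "sigma_finite_measure N"
    and g: "g \<in> borel_measurable (M \<Otimes>\<^sub>M N)"
  shows "distr (density (M \<Otimes>\<^sub>M N) g) N snd = density N (\<lambda>y. \<integral>\<^sup>+x. g (x,y) \<partial>M)"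
proof -
  interpret pair_sigma_finite M N using sM sN by (simp add: pair_sigma_finite_def)
  have "distr (density (M \<Otimes>\<^sub>M N) g) N snd = distr (distr (density (M \<Otimes>\<^sub>M N) g) (N \<Otimes>\<^sub>M M) (\<lambda>(x,y). (y,x))) N fst"
    by (subst distr_distr) (auto simp: comp_def case_prod_beta intro!: distr_cong)
  also have "distr (density (M \<Otimes>\<^sub>M N) g) (N \<Otimes>\<^sub>M M) (\<lambda>(x,y). (y,x)) = density (N \<Otimes>\<^sub>M M) (\<lambda>z. g (snd z, fst z))"
  proof -
    have "density (M \<Otimes>\<^sub>M N) g = density (distr (N \<Otimes>\<^sub>M M) (M \<Otimes>\<^sub>M N) (\<lambda>(x,y). (y,x))) g"
      by (subst distr_pair_swap[symmetric]) simp
    also have "\<dots> = distr (density (N \<Otimes>\<^sub>M M) (\<lambda>z. g (snd z, fst z))) (M \<Otimes>\<^sub>M N) (\<lambda>(x,y). (y,x))"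
      using g by (subst density_distr) (auto simp: comp_def case_prod_beta)
    finally have "distr (density (M \<Otimes>\<^sub>M N) g) (N \<Otimes>\<^sub>M M) (\<lambda>(x,y). (y,x)) = distr (distr (density (N \<Otimes>\<^sub>M M) (\<lambda>z. g (snd z, fst z))) (M \<Otimes>\<^sub>M N) (\<lambda>(x,y). (y,x))) (N \<Otimes>\<^sub>M M) (\<lambda>(x,y). (y,x))" by simp
    also have "\<dots> = density (N \<Otimes>\<^sub>M M) (\<lambda>z. g (snd z, fst z))"
      by (subst distr_distr) (auto simp: comp_def case_prod_beta intro!: distr_id2 simp: space_pair_measure)
    finally show ?thesis .
  qed
  also have "distr (density (N \<Otimes>\<^sub>M M) (\<lambda>z. g (snd z, fst z))) N fst = density N (\<lambda>y. \<integral>\<^sup>+x. g (x,y) \<partial>M)"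
    proof -
    have "(\<lambda>z. g (snd z, fst z)) \<in> borel_measurable (N \<Otimes>\<^sub>M M)"
      using g by measurable
    from marg_fst[OF sN sM this] show ?thesis by simp
  qed
  finally show ?thesis .
qed

lemma coupling_density:
  fixes \<nu> \<mu> :: "'a::euclidean_space measure"
  assumes sN: "sets \<nu> = sets borel" and sM: "sets \<mu> = sets borel"
    and pN: "prob_space \<nu>" and pM: "prob_space \<mu>"
    and g: "g \<in> borel_measurable borel"
    and gs: "\<And>y. (\<integral>\<^sup>+x. g (x,y) \<partial>\<nu>) = 1"
  shows "density (\<nu> \<Otimes>\<^sub>M \<mu>) g \<in> couplings (density \<nu> (\<lambda>x. \<integral>\<^sup>+y. g (x,y) \<partial>\<mu>)) \<mu>"
proof -
  have sfN: "sigma_finite_measure \<nu>" using pN by (simp add: prob_space_imp_sigma_finite)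
  have sfM: "sigma_finite_measure \<mu>" using pM by (simp add: prob_space_imp_sigma_finite)
  have sP: "sets (\<nu> \<Otimes>\<^sub>M \<mu>) = sets (borel :: ('a \<times> 'a) measure)"
    by (rule sets_pair_borel[OF sN sM])
  have gm: "g \<in> borel_measurable (\<nu> \<Otimes>\<^sub>M \<mu>)"
    using g by (simp add: measurable_cong_sets[OF sP refl])
  let ?G = "density (\<nu> \<Otimes>\<^sub>M \<mu>) g"
  have d1: "distr ?G borel fst = distr ?G \<nu> fst"
    by (rule distr_cong) (auto simp: sN)
  have d2: "distr ?G borel snd = distr ?G \<mu> snd"
    by (rule distr_cong) (auto simp: sM)
  have m1: "distr ?G \<nu> fst = density \<nu> (\<lambda>x. \<integral>\<^sup>+y. g (x,y) \<partial>\<mu>)"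
    by (rule marg_fst[OF sfN sfM gm])
  have m2: "distr ?G \<mu> snd = \<mu>"
    using marg_snd[OF sfN sfM gm] by (simp add: gs density_1)
  have "prob_space ?G"
  proof (rule prob_spaceI)
    have "emeasure ?G (space ?G) = emeasure (distr ?G \<mu> snd) (space \<mu>)"
      by (subst emeasure_distr) (auto simp: space_pair_measure intro!: arg_cong[where f="emeasure _"])
    also have "\<dots> = 1" using m2 pM by (simp add: prob_space.emeasure_space_1)
    finally show "emeasure ?G (space ?G) = 1" .
  qed
  then show ?thesis unfolding couplings_def using d1 d2 m1 m2 sP by simp
qed

lemma powr_diff_le:
  fixes x y :: "'a::real_normed_vector"
  assumes "p \<ge> 0"
  shows "norm (x - y) powr p \<le> 2 powr p * (norm x powr p + norm y powr p)"
proof -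
  have "norm (x - y) \<le> 2 * max (norm x) (norm y)"
    using norm_triangle_ineq4[of x y] by linarith
  then have "norm (x - y) powr p \<le> (2 * max (norm x) (norm y)) powr p"
    using assms by (intro powr_mono2) auto
  also have "\<dots> = 2 powr p * max (norm x) (norm y) powr p"
    by (subst powr_mult) auto
  also have "max (norm x) (norm y) powr p \<le> norm x powr p + norm y powr p"
    by (cases "norm x \<le> norm y") (auto simp: max_def)
  finally show ?thesis by (simp add: mult_left_mono)
qed

lemma product_coupling:
  fixes q \<mu> :: "'a::euclidean_space measure"
  assumes sN: "sets q = sets borel" and sM: "sets \<mu> = sets borel"
    and pN: "prob_space q" and pM: "prob_space \<mu>"
  shows "q \<Otimes>\<^sub>M \<mu> \<in> couplings q \<mu>"
proof -
  have "density (q \<Otimes>\<^sub>M \<mu>) (\<lambda>_. 1) \<in> couplings (density q (\<lambda>x. \<integral>\<^sup>+y. 1 \<partial>\<mu>)) \<mu>"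
    by (rule coupling_density[OF sN sM pN pM]) (auto simp: pN prob_space.emeasure_space_1)
  then show ?thesis by (simp add: density_1 pM prob_space.emeasure_space_1)
qed

lemma prod_cost_finite:
  fixes q \<mu> :: "'a::euclidean_space measure"
  assumes q: "q \<in> Wspace p" and m: "\<mu> \<in> Wspace p" and p: "p \<ge> 0"
  shows "(\<integral>\<^sup>+ z. ennreal (norm (fst z - snd z) powr p) \<partial>(q \<Otimes>\<^sub>M \<mu>)) < \<infinity>"
proof -
  have sN: "sets q = sets borel" and pN: "prob_space q" and fq: "(\<integral>\<^sup>+ x. ennreal (norm x powr p) \<partial>q) < \<infinity>"
    using q by (auto simp: Wspace_def)
  have sM: "sets \<mu> = sets borel" and pM: "prob_space \<mu>" and fm: "(\<integral>\<^sup>+ x. ennreal (norm x powr p) \<partial>\<mu>) < \<infinity>"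
    using m by (auto simp: Wspace_def)
  interpret pair_prob_space q \<mu> using pN pM by (simp add: pair_prob_space_def pair_sigma_finite_def prob_space_imp_sigma_finite)
  have sP: "sets (q \<Otimes>\<^sub>M \<mu>) = sets (borel :: ('a \<times> 'a) measure)"
    by (rule sets_pair_borel[OF sN sM])
  have mq: "(\<lambda>x. ennreal (norm x powr p)) \<in> borel_measurable q"
    using sN by (simp add: measurable_cong_sets[OF sN refl])
  have mm: "(\<lambda>x. ennreal (norm x powr p)) \<in> borel_measurable \<mu>"
    using sM by (simp add: measurable_cong_sets[OF sM refl])
  have mq': "(\<lambda>x. norm x powr p) \<in> borel_measurable q"
    using sN by (simp add: measurable_cong_sets[OF sN refl])
  have mm': "(\<lambda>x. norm x powr p) \<in> borel_measurable \<mu>"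
    using sM by (simp add: measurable_cong_sets[OF sM refl])
  have "(\<integral>\<^sup>+ z. ennreal (norm (fst z - snd z) powr p) \<partial>(q \<Otimes>\<^sub>M \<mu>)) \<le> (\<integral>\<^sup>+ z. ennreal (2 powr p) * (ennreal (norm (fst z) powr p) + ennreal (norm (snd z) powr p)) \<partial>(q \<Otimes>\<^sub>M \<mu>))"
    by (rule nn_integral_mono) (use powr_diff_le[OF p] in \<open>auto simp: ennreal_mult[symmetric] ennreal_plus[symmetric] simp del: ennreal_plus\<close>)
  also have "\<dots> = ennreal (2 powr p) * ((\<integral>\<^sup>+ z. ennreal (norm (fst z) powr p) \<partial>(q \<Otimes>\<^sub>M \<mu>)) + (\<integral>\<^sup>+ z. ennreal (norm (snd z) powr p) \<partial>(q \<Otimes>\<^sub>M \<mu>)))"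
    using measurable_compose[OF measurable_fst mq] measurable_compose[OF measurable_snd mm]
      measurable_compose[OF measurable_fst mq'] measurable_compose[OF measurable_snd mm']
    by (subst nn_integral_cmult; (subst nn_integral_add)?) (auto intro!: borel_measurable_add)
  also have "(\<integral>\<^sup>+ z. ennreal (norm (fst z) powr p) \<partial>(q \<Otimes>\<^sub>M \<mu>)) = (\<integral>\<^sup>+ x. ennreal (norm x powr p) \<partial>q)"
    by (subst M2.nn_integral_fst[symmetric]) (rule measurable_compose[OF measurable_fst mq], simp add: M2.emeasure_space_1)
  also have "(\<integral>\<^sup>+ z. ennreal (norm (snd z) powr p) \<partial>(q \<Otimes>\<^sub>M \<mu>)) = (\<integral>\<^sup>+ x. ennreal (norm x powr p) \<partial>\<mu>)"
    by (subst nn_integral_snd[symmetric]) (rule measurable_compose[OF measurable_snd mm], simp add: M1.emeasure_space_1)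
  also have "ennreal (2 powr p) * ((\<integral>\<^sup>+ x. ennreal (norm x powr p) \<partial>q) + (\<integral>\<^sup>+ x. ennreal (norm x powr p) \<partial>\<mu>)) < \<infinity>"
    using fq fm by (simp add: ennreal_mult_less_top)
  finally show ?thesis .
qed

lemma INF_finite:
  fixes q \<mu> :: "'a::euclidean_space measure"
  assumes q: "q \<in> Wspace p" and m: "\<mu> \<in> Wspace p" and p: "p \<ge> 0"
  shows "(INF \<gamma>\<in>couplings q \<mu>. \<integral>\<^sup>+ z. ennreal (norm (fst z - snd z) powr p) \<partial>\<gamma>) < \<infinity>"
proof -
  have "(INF \<gamma>\<in>couplings q \<mu>. \<integral>\<^sup>+ z. ennreal (norm (fst z - snd z) powr p) \<partial>\<gamma>)
      \<le> (\<integral>\<^sup>+ z. ennreal (norm (fst z - snd z) powr p) \<partial>(q \<Otimes>\<^sub>M \<mu>))"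
    by (rule INF_lower) (use q m in \<open>auto intro!: product_coupling simp: Wspace_def\<close>)
  also have "\<dots> < \<infinity>" by (rule prod_cost_finite[OF q m p])
  finally show ?thesis .
qed

lemma space_borel_sets: "sets M = sets (borel::'b::topological_space measure) \<Longrightarrow> space M = UNIV"
  by (metis sets_eq_imp_space_eq space_borel)

lemma coupling_lower:
  fixes q \<mu> :: "'a::euclidean_space measure"
  assumes g: "\<gamma> \<in> couplings q \<mu>" and C: "closed C" and qC: "emeasure q (UNIV - C) = 0"
    and U: "open U" and r: "r > 0" and p: "p > 0" and Ur: "\<And>y. y \<in> U \<Longrightarrow> r < infdist y C"
  shows "ennreal (r powr p) * emeasure \<mu> U \<le> (\<integral>\<^sup>+ z. ennreal (norm (fst z - snd z) powr p) \<partial>\<gamma>)"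
proof -
  have sg: "sets \<gamma> = sets borel" and d1: "distr \<gamma> borel fst = q" and d2: "distr \<gamma> borel snd = \<mu>"
    using g by (auto simp: couplings_def)
  have spg: "space \<gamma> = UNIV" by (rule space_borel_sets[OF sg])
  have CU: "C \<times> U \<in> sets \<gamma>"
  proof -
    have "C \<times> U = (C \<times> UNIV) \<inter> (UNIV \<times> U)" by auto
    moreover have "C \<times> UNIV \<in> sets (borel :: ('a\<times>'a) measure)" using C by (intro borel_closed closed_Times) auto
    moreover have "UNIV \<times> U \<in> sets (borel :: ('a\<times>'a) measure)" using U by (intro borel_open open_Times) auto
    ultimately show ?thesis using sg by simp
  qed
  have s1: "(UNIV - C) \<times> UNIV \<in> sets \<gamma>" using C sg by (simp add: borel_open open_Times open_Diff)
  have s2: "UNIV \<times> U \<in> sets \<gamma>" using U sg by (simp add: borel_open open_Times)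
  have mf: "fst \<in> measurable \<gamma> borel" using measurable_fst[of "borel::'a measure" "borel::'a measure"] by (simp add: borel_prod measurable_cong_sets[OF sg refl])
  have ms: "snd \<in> measurable \<gamma> borel" using measurable_snd[of "borel::'a measure" "borel::'a measure"] by (simp add: borel_prod measurable_cong_sets[OF sg refl])
  have e1: "emeasure \<gamma> ((UNIV - C) \<times> UNIV) = 0"
  proof -
    have "emeasure q (UNIV - C) = emeasure \<gamma> (fst -` (UNIV - C) \<inter> space \<gamma>)"
      using d1[symmetric] mf C by (simp add: emeasure_distr borel_open open_Diff)
    also have "fst -` (UNIV - C) \<inter> space \<gamma> = (UNIV - C) \<times> UNIV" using spg by auto
    finally show ?thesis using qC by simp
  qed
  have e2: "emeasure \<gamma> (UNIV \<times> U) = emeasure \<mu> U"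
  proof -
    have "emeasure \<mu> U = emeasure \<gamma> (snd -` U \<inter> space \<gamma>)"
      using d2[symmetric] ms U by (simp add: emeasure_distr borel_open)
    also have "snd -` U \<inter> space \<gamma> = UNIV \<times> U" using spg by auto
    finally show ?thesis by simp
  qed
  have "emeasure \<mu> U \<le> emeasure \<gamma> (C \<times> U \<union> (UNIV - C) \<times> UNIV)"
    unfolding e2[symmetric] using CU s1 by (intro emeasure_mono) auto
  also have "\<dots> \<le> emeasure \<gamma> (C \<times> U) + emeasure \<gamma> ((UNIV - C) \<times> UNIV)"
    using CU s1 by (rule emeasure_subadditive)
  finally have le: "emeasure \<mu> U \<le> emeasure \<gamma> (C \<times> U)" using e1 by simp
  have "ennreal (r powr p) * emeasure \<mu> U \<le> ennreal (r powr p) * emeasure \<gamma> (C \<times> U)"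
    using le by (rule mult_left_mono) simp
  also have "\<dots> = (\<integral>\<^sup>+ z. ennreal (r powr p) * indicator (C \<times> U) z \<partial>\<gamma>)"
    using CU by (simp add: nn_integral_cmult_indicator)
  also have "\<dots> \<le> (\<integral>\<^sup>+ z. ennreal (norm (fst z - snd z) powr p) \<partial>\<gamma>)"
  proof (rule nn_integral_mono)
    fix z assume "z \<in> space \<gamma>"
    show "ennreal (r powr p) * indicator (C \<times> U) z \<le> ennreal (norm (fst z - snd z) powr p)"
    proof (cases "z \<in> C \<times> U")
      case True
      then have "r < infdist (snd z) C" using Ur by auto
      also have "infdist (snd z) C \<le> dist (snd z) (fst z)" using True by (intro infdist_le) auto
      also have "dist (snd z) (fst z) = norm (fst z - snd z)" by (simp add: dist_norm norm_minus_commute)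
      finally have "r powr p \<le> norm (fst z - snd z) powr p" using r p by (intro powr_mono2) auto
      then show ?thesis using True by simp
    qed simp
  qed
  finally show ?thesis .
qed

lemma closure_sub:
  fixes \<nu> \<mu> :: "'a::euclidean_space measure"
  assumes p: "p \<ge> 1" and nu: "\<nu> \<in> Wspace p" and mu: "\<mu> \<in> Wclosure p (Qinf \<nu>)"
  shows "supp \<mu> \<subseteq> supp \<nu>"
proof -
  have mW: "\<mu> \<in> Wspace p" using mu by (simp add: Wclosure_def)
  have sN: "sets \<nu> = sets borel" and pN: "prob_space \<nu>" using nu by (auto simp: Wspace_def)
  have sM: "sets \<mu> = sets borel" and pM: "prob_space \<mu>" using mW by (auto simp: Wspace_def)
  have spN: "space \<nu> = UNIV" by (rule space_borel_sets[OF sN])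
  have spM: "space \<mu> = UNIV" by (rule space_borel_sets[OF sM])
  have key: "emeasure \<mu> (space \<mu> - C) = 0" if C: "closed C" and nC: "emeasure \<nu> (space \<nu> - C) = 0" for C
  proof (rule ccontr)
    assume ne: "emeasure \<mu> (space \<mu> - C) \<noteq> 0"
    have Cne: "C \<noteq> {}"
    proof
      assume "C = {}"
      then have "emeasure \<nu> (space \<nu>) = 0" using nC by simp
      then show False using pN by (simp add: prob_space.emeasure_space_1)
    qed
    define U where "U k = {y. 1 / real (Suc k) < infdist y C}" for k
    have Uo: "open (U k)" for k unfolding U_def
      by (intro open_Collect_less continuous_intros)
    have Us: "range U \<subseteq> sets \<mu>" using Uo sM by auto
    have Uinc: "incseq U"
    proof (rule incseq_SucI)
      fix k show "U k \<subseteq> U (Suc k)" unfolding U_def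
      proof (safe)
        fix x assume h: "1 / real (Suc k) < infdist x C"
        have "1 / real (Suc (Suc k)) \<le> 1 / real (Suc k)" by (intro divide_left_mono) auto
        then show "1 / real (Suc (Suc k)) < infdist x C" using h by linarith
      qed
    qed
    have UU: "(\<Union>k. U k) = space \<mu> - C"
    proof (safe)
      fix y k assume "y \<in> U k" "y \<in> C"
      then show False unfolding U_def by simp
    next
      fix y k assume "y \<in> U k" then show "y \<in> space \<mu>" using spM by simp
    next
      fix y assume "y \<in> space \<mu>" "y \<notin> C"
      then have "infdist y C > 0" using infdist_pos_not_in_closed[OF C Cne] by simp
      then obtain k where "inverse (real (Suc k)) < infdist y C" using reals_Archimedean by blast
      then show "y \<in> (\<Union>k. U k)" unfolding U_def by (auto simp: field_simps)
    qed
    have lim: "(\<lambda>k. emeasure \<mu> (U k)) \<longlonglongrightarrow> emeasure \<mu> (space \<mu> - C)"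
      using Lim_emeasure_incseq[OF Us Uinc] UU by simp
    have "\<exists>k. emeasure \<mu> (U k) \<noteq> 0"
    proof (rule ccontr)
      assume "\<not> (\<exists>k. emeasure \<mu> (U k) \<noteq> 0)"
      then have "(\<lambda>k. emeasure \<mu> (U k)) = (\<lambda>_. 0)" by auto
      with lim have "(\<lambda>_. 0::ennreal) \<longlonglongrightarrow> emeasure \<mu> (space \<mu> - C)" by simp
      then have "emeasure \<mu> (space \<mu> - C) = 0" by (simp add: LIMSEQ_const_iff)
      then show False using ne by simp
    qed
    then obtain k where k: "emeasure \<mu> (U k) \<noteq> 0" by blast
    define r where "r = 1 / real (Suc k)"
    have r: "r > 0" by (simp add: r_def)
    define a where "a = enn2real (emeasure \<mu> (U k))"
    have aeq: "emeasure \<mu> (U k) = ennreal a"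
      unfolding a_def using prob_space.emeasure_le_1[OF pM, of "U k"] by (intro ennreal_enn2real[symmetric]) (metis ennreal_one_less_top le_less_trans)
    have apos: "a > 0"
    proof (rule ccontr)
      assume "\<not> a > 0"
      then have "ennreal a = 0" by (simp add: ennreal_neg)
      then show False using k aeq by simp
    qed
    define L where "L = r powr p * a"
    have Lpos: "L > 0" using r apos by (simp add: L_def)
    obtain q where q: "q \<in> Qinf \<nu>" "q \<in> Wspace p" and qd: "Wdist p q \<mu> < L powr (1/p)"
    proof -
      have "L powr (1/p) > 0" using Lpos by simp
      then have "\<exists>q\<in>Qinf \<nu> \<inter> Wspace p. Wdist p q \<mu> < L powr (1/p)"
        using mu unfolding Wclosure_def by blast
      then show ?thesis using that by blast
    qed
    obtain f where fm: "f \<in> borel_measurable borel" and qf: "q = density \<nu> f"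
      using q(1) unfolding Qinf_def by blast
    have qC: "emeasure q (UNIV - C) = 0"
    proof -
      have C': "UNIV - C \<in> sets \<nu>" using C sN by (simp add: borel_open open_Diff)
      have "AE x in \<nu>. x \<notin> UNIV - C"
        using nC spN C' by (intro AE_not_in) (simp add: null_sets_def)
      have C'': "UNIV - C \<in> sets borel" using C by (simp add: borel_open open_Diff)
      have fim: "(\<lambda>x. f x * indicator (UNIV - C) x) \<in> borel_measurable \<nu>"
        unfolding measurable_cong_sets[OF sN refl] using fm C'' by measurable
      then have "(\<integral>\<^sup>+x. f x * indicator (UNIV - C) x \<partial>\<nu>) = 0"
        using \<open>AE x in \<nu>. x \<notin> UNIV - C\<close> by (subst nn_integral_0_iff_AE) (auto elim!: AE_mp)
      then show ?thesis using C' fm unfolding qf by (subst emeasure_density) (auto simp: measurable_cong_sets[OF sN refl])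
    qed
    have low: "ennreal L \<le> (\<integral>\<^sup>+ z. ennreal (norm (fst z - snd z) powr p) \<partial>\<gamma>)" if g: "\<gamma> \<in> couplings q \<mu>" for \<gamma>
    proof -
      have "ennreal L = ennreal (r powr p) * emeasure \<mu> (U k)"
        using aeq r apos by (simp add: L_def ennreal_mult)
      also have "\<dots> \<le> (\<integral>\<^sup>+ z. ennreal (norm (fst z - snd z) powr p) \<partial>\<gamma>)"
        by (rule coupling_lower[OF g C qC Uo r]) (use p in \<open>auto simp: U_def r_def\<close>)
      finally show ?thesis .
    qed
    let ?I = "(INF \<gamma>\<in>couplings q \<mu>. \<integral>\<^sup>+ z. ennreal (norm (fst z - snd z) powr p) \<partial>\<gamma>)"
    have "ennreal L \<le> ?I" using low by (rule INF_greatest)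
    then have "enn2real (ennreal L) \<le> enn2real ?I"
      using INF_finite[OF q(2) mW] p by (intro enn2real_mono) auto
    then have "L \<le> enn2real ?I" using Lpos by simp
    then have "L powr (1/p) \<le> enn2real ?I powr (1/p)" using Lpos p by (intro powr_mono2) auto
    then show False using qd unfolding Wdist_def by simp
  qed
  show ?thesis
  proof
    fix x assume x: "x \<in> supp \<mu>"
    show "x \<in> supp \<nu>" unfolding supp_def
    proof (rule InterI)
      fix C assume "C \<in> {C. closed C \<and> emeasure \<nu> (space \<nu> - C) = 0}"
      then have "C \<in> {C. closed C \<and> emeasure \<mu> (space \<mu> - C) = 0}" using key by auto
      then show "x \<in> C" using x unfolding supp_def by blast
    qed
  qed
qed

lemma supp_closed: "closed (supp \<mu>)"
  unfolding supp_def by (rule closed_Inter) auto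

lemma supp_null:
  fixes \<mu> :: "'a::euclidean_space measure"
  assumes sM: "sets \<mu> = sets borel"
  shows "emeasure \<mu> (UNIV - supp \<mu>) = 0"
proof -
  have spM: "space \<mu> = UNIV" by (rule space_borel_sets[OF sM])
  define F where "F = (\<lambda>C. UNIV - C) ` {C. closed C \<and> emeasure \<mu> (space \<mu> - C) = 0}"
  have Fo: "\<And>S. S \<in> F \<Longrightarrow> open S" unfolding F_def by auto
  obtain F' where F': "F' \<subseteq> F" "countable F'" "\<Union>F' = \<Union>F"
    using Lindelof[OF Fo] by blast
  have eq: "UNIV - supp \<mu> = \<Union>F" unfolding supp_def F_def by auto
  have "(\<Union>S\<in>F'. S) \<in> null_sets \<mu>"
  proof (rule null_sets_UN'[OF F'(2)])
    fix S assume "S \<in> F'"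
    then have "S \<in> F" using F'(1) by auto
    then obtain C where C: "closed C" "emeasure \<mu> (space \<mu> - C) = 0" "S = UNIV - C" unfolding F_def by auto
    have "S \<in> sets \<mu>" using C sM by (simp add: borel_open open_Diff)
    then show "S \<in> null_sets \<mu>" using C spM by (simp add: null_sets_def)
  qed
  then show ?thesis using eq F'(3) by (simp add: null_sets_def)
qed

lemma supp_ball_pos:
  fixes \<nu> :: "'a::euclidean_space measure"
  assumes sN: "sets \<nu> = sets borel" and z: "z \<in> supp \<nu>" and r: "r > 0"
  shows "emeasure \<nu> (ball z r) > 0"
proof (rule ccontr)
  assume "\<not> emeasure \<nu> (ball z r) > 0"
  then have 0: "emeasure \<nu> (ball z r) = 0" by simp
  have spN: "space \<nu> = UNIV" by (rule space_borel_sets[OF sN])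
  have "closed (UNIV - ball z r)" by auto
  moreover have "space \<nu> - (UNIV - ball z r) = ball z r" using spN by auto
  ultimately have "supp \<nu> \<subseteq> UNIV - ball z r" using 0 unfolding supp_def by auto
  then show False using z r by auto
qed



lemma cost_meas: "(\<lambda>z::'a::euclidean_space \<times> 'a. ennreal (norm (fst z - snd z) powr p)) \<in> borel_measurable borel"
proof -
  have "(\<lambda>z::'a \<times> 'a. ennreal (norm (fst z - snd z) powr p)) \<in> borel_measurable (borel \<Otimes>\<^sub>M borel)"
    by measurable
  then show ?thesis by (simp only: borel_prod)
qed

lemma tail:
  fixes \<nu> \<mu> :: "'a::euclidean_space measure"
  assumes nu: "\<nu> \<in> Wspace p" and mu: "\<mu> \<in> Wspace p" and p: "p \<ge> 0" and eps: "eps > (0::ennreal)"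
  shows "\<exists>R. (\<integral>\<^sup>+y. (\<integral>\<^sup>+x. ennreal (norm (x - y) powr p) \<partial>\<nu>) * indicator (UNIV - cball 0 R) y \<partial>\<mu>) < eps"
proof -
  have sN: "sets \<nu> = sets borel" and pN: "prob_space \<nu>" using nu by (auto simp: Wspace_def)
  have sM: "sets \<mu> = sets borel" and pM: "prob_space \<mu>" using mu by (auto simp: Wspace_def)
  interpret pair_prob_space \<nu> \<mu> using pN pM by (simp add: pair_prob_space_def pair_sigma_finite_def prob_space_imp_sigma_finite)
  define \<phi> where "\<phi> y = (\<integral>\<^sup>+x. ennreal (norm (x - y) powr p) \<partial>\<nu>)" for y
  have cm: "(\<lambda>z. ennreal (norm (fst z - snd z) powr p)) \<in> borel_measurable (\<nu> \<Otimes>\<^sub>M \<mu>)"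
    using cost_meas by (simp add: measurable_cong_sets[OF sets_pair_borel[OF sN sM] refl])
  have cm': "(\<lambda>(y,x). ennreal (norm (x - y) powr p)) \<in> borel_measurable (\<mu> \<Otimes>\<^sub>M \<nu>)"
    using measurable_pair_swap[OF cm] by (simp add: case_prod_beta)
  have phim: "\<phi> \<in> borel_measurable \<mu>"
    unfolding \<phi>_def using M1.borel_measurable_nn_integral[OF cm'] by simp
  have "(\<integral>\<^sup>+y. \<phi> y \<partial>\<mu>) = (\<integral>\<^sup>+ z. ennreal (norm (fst z - snd z) powr p) \<partial>(\<nu> \<Otimes>\<^sub>M \<mu>))"
    unfolding \<phi>_def using nn_integral_snd[OF cm] by simp
  also have "\<dots> < \<infinity>" by (rule prod_cost_finite[OF nu mu p])
  finally have fin: "(\<integral>\<^sup>+y. \<phi> y \<partial>\<mu>) < \<infinity>" .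
  define D where "D = density \<mu> \<phi>"
  define A where "A n = UNIV - cball (0::'a) (real n)" for n
  have As: "range A \<subseteq> sets D"
  proof -
    have "A n \<in> sets borel" for n unfolding A_def by (intro borel_open) auto
    then show ?thesis unfolding D_def using sM by auto
  qed
  have Ad: "decseq A" unfolding A_def decseq_def by auto
  have Ai: "(\<Inter>n. A n) = {}"
  proof -
    have "x \<notin> (\<Inter>n. A n)" for x
    proof -
      obtain n where "norm x \<le> real n" using real_arch_simple by blast
      then show ?thesis unfolding A_def by auto
    qed
    then show ?thesis by auto
  qed
  have Afin: "emeasure D (A n) \<noteq> \<infinity>" for n
  proof -
    have "emeasure D (A n) \<le> emeasure D (space D)" by (rule emeasure_space)
    also have "\<dots> = (\<integral>\<^sup>+y. \<phi> y * indicator (space \<mu>) y \<partial>\<mu>)" unfolding D_def using phim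
      by (subst emeasure_density) auto
    also have "\<dots> = (\<integral>\<^sup>+y. \<phi> y \<partial>\<mu>)"
      by (intro nn_integral_cong) (auto simp: indicator_def)
    finally show ?thesis using fin by (auto simp: top_unique)
  qed
  have "(\<lambda>n. emeasure D (A n)) \<longlonglongrightarrow> 0"
    using Lim_emeasure_decseq[OF As Ad Afin] Ai by simp
  then have "eventually (\<lambda>n. emeasure D (A n) < eps) sequentially"
    using eps by (rule order_tendstoD(2))
  then obtain n where n: "emeasure D (A n) < eps" by (meson eventually_sequentially order_refl)
  have "emeasure D (A n) = (\<integral>\<^sup>+y. \<phi> y * indicator (A n) y \<partial>\<mu>)"
    unfolding D_def using phim As by (subst emeasure_density) (auto simp: D_def)
  then show ?thesis using n unfolding A_def \<phi>_def by auto
qed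

lemma weights:
  fixes Z W :: "'a::euclidean_space set" and d :: real and y :: 'a
  assumes Z: "finite Z" and z: "z \<in> Z"
  defines "N \<equiv> \<lambda>y. (\<Sum>z\<in>Z. indicator (ball z d) y :: real)"
  shows "0 \<le> indicator W y * indicator (ball z d) y / N y"
    and "indicator W y * indicator (ball z d) y / N y \<le> 1"
    and "indicator W y * indicator (ball z d) y / N y \<noteq> 0 \<Longrightarrow> y \<in> ball z d"
proof -
  have N0: "N y \<ge> 0" unfolding N_def by (intro sum_nonneg) auto
  show "0 \<le> indicator W y * indicator (ball z d) y / N y" using N0 by simp
  show "indicator W y * indicator (ball z d) y / N y \<noteq> 0 \<Longrightarrow> y \<in> ball z d"
    by (auto simp: indicator_def split: if_splits)
  show "indicator W y * indicator (ball z d) y / N y \<le> 1"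
  proof (cases "y \<in> ball z d")
    case True
    have "indicator (ball z d) y \<le> N y" unfolding N_def
      using Z z by (intro member_le_sum) auto
    then have "N y \<ge> 1" using True by simp
    then show ?thesis by (simp add: indicator_def)
  qed simp
qed

lemma weights_sum:
  fixes Z W :: "'a::euclidean_space set" and d :: real and y :: 'a
  assumes Z: "finite Z" and W: "W \<subseteq> (\<Union>z\<in>Z. ball z d)"
  defines "N \<equiv> \<lambda>y. (\<Sum>z\<in>Z. indicator (ball z d) y :: real)"
  shows "(\<Sum>z\<in>Z. indicator W y * indicator (ball z d) y / N y) = indicator W y"
proof (cases "y \<in> W")
  case True
  then obtain z where z: "z \<in> Z" "y \<in> ball z d" using W by auto
  have "indicator (ball z d) y \<le> N y" unfolding N_def
    using Z z by (intro member_le_sum) auto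
  then have "N y \<ge> 1" using z by simp
  have "(\<Sum>z\<in>Z. indicator W y * indicator (ball z d) y / N y) = (\<Sum>z\<in>Z. indicator (ball z d) y) / N y"
    using True by (simp add: sum_divide_distrib)
  also have "\<dots> = 1" using \<open>N y \<ge> 1\<close> unfolding N_def by simp
  finally show ?thesis using True by simp
qed simp

lemma approx:
  fixes \<nu> \<mu> :: "'a::euclidean_space measure"
  assumes p: "p \<ge> 1" and nu: "\<nu> \<in> Wspace p" and mu: "\<mu> \<in> Wspace p" and sub: "supp \<mu> \<subseteq> supp \<nu>"
    and e: "e > 0"
  shows "\<exists>q\<in>Qinf \<nu> \<inter> Wspace p. Wdist p q \<mu> < e"
proof -
  have sN: "sets \<nu> = sets borel" and pN: "prob_space \<nu>" and momN: "(\<integral>\<^sup>+ x. ennreal (norm x powr p) \<partial>\<nu>) < \<infinity>"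
    using nu by (auto simp: Wspace_def)
  have sM: "sets \<mu> = sets borel" and pM: "prob_space \<mu>" using mu by (auto simp: Wspace_def)
  have spN: "space \<nu> = UNIV" by (rule space_borel_sets[OF sN])
  have spM: "space \<mu> = UNIV" by (rule space_borel_sets[OF sM])
  interpret pair_prob_space \<nu> \<mu> using pN pM by (simp add: pair_prob_space_def pair_sigma_finite_def prob_space_imp_sigma_finite)
  have sP: "sets (\<nu> \<Otimes>\<^sub>M \<mu>) = sets (borel :: ('a \<times> 'a) measure)"
    by (rule sets_pair_borel[OF sN sM])
  define c where "c = (\<lambda>w::'a\<times>'a. ennreal (norm (fst w - snd w) powr p))"
  have cm: "c \<in> borel_measurable (\<nu> \<Otimes>\<^sub>M \<mu>)"
    unfolding c_def using cost_meas by (simp add: measurable_cong_sets[OF sP refl])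
  define \<phi> where "\<phi> y = (\<integral>\<^sup>+x. ennreal (norm (x - y) powr p) \<partial>\<nu>)" for y
  define \<delta> where "\<delta> = e / 4"
  have \<delta>: "\<delta> > 0" using e by (simp add: \<delta>_def)
  have ep: "e powr p > 0" using e by simp
  obtain R where R: "(\<integral>\<^sup>+y. \<phi> y * indicator (UNIV - cball 0 R) y \<partial>\<mu>) < ennreal (e powr p / 2)"
    using tail[OF nu mu, of "ennreal (e powr p / 2)"] p ep unfolding \<phi>_def by auto
  define K where "K = supp \<mu> \<inter> cball 0 R"
  have Kc: "compact K" unfolding K_def using supp_closed by (intro closed_Int_compact) auto
  obtain Z where Z: "Z \<subseteq> K" "finite Z" "K \<subseteq> (\<Union>z\<in>Z. ball z \<delta>)"
    using compactE_image[OF Kc, of K "\<lambda>z. ball z \<delta>"] \<delta> by force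
  define m where "m z = measure \<nu> (ball z \<delta>)" for z
  have mpos: "m z > 0" and mem: "emeasure \<nu> (ball z \<delta>) = ennreal (m z)" if "z \<in> Z" for z
  proof -
    have "z \<in> supp \<nu>" using that Z(1) sub unfolding K_def by auto
    then have "emeasure \<nu> (ball z \<delta>) > 0" by (rule supp_ball_pos[OF sN _ \<delta>])
    moreover show "emeasure \<nu> (ball z \<delta>) = ennreal (m z)"
      unfolding m_def by (simp add: M1.emeasure_eq_measure)
    ultimately show "m z > 0" by (simp add: ennreal_less_zero_iff)  
  qed
  define W where "W = cball 0 R \<inter> (\<Union>z\<in>Z. ball z \<delta>)"
  define N where "N = (\<lambda>y. (\<Sum>z\<in>Z. indicator (ball z \<delta>) y :: real))"
  define a where "a z y = indicator W y * indicator (ball z \<delta>) y / N y" for z y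
  have a0: "0 \<le> a z y" if "z \<in> Z" for z y
    unfolding a_def N_def by (rule weights(1)[OF Z(2) that])
  have a1: "a z y \<le> 1" if "z \<in> Z" for z y
    unfolding a_def N_def by (rule weights(2)[OF Z(2) that])
  have aball: "y \<in> ball z \<delta>" if "z \<in> Z" "a z y \<noteq> 0" for z y
    using that(2) unfolding a_def N_def by (rule weights(3)[OF Z(2) that(1)])
  have asum: "(\<Sum>z\<in>Z. a z y) = indicator W y" for y
    unfolding a_def N_def by (rule weights_sum[OF Z(2)]) (auto simp: W_def)
  have Wb[measurable]: "W \<in> sets borel"
    unfolding W_def using Z(2) by (intro sets.Int borel_closed borel_open) auto
  have ballb[measurable]: "ball z r \<in> sets borel" for z :: 'a and r by (simp add: borel_open)
  have am[measurable]: "(\<lambda>y. a z y) \<in> borel_measurable borel" for z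
    unfolding a_def N_def by measurable
  define g where "g = (\<lambda>w. (\<Sum>z\<in>Z. ennreal (a z (snd w)) * ennreal (indicator (ball z \<delta>) (fst w) / m z))
                     + ennreal (indicator (UNIV - W) (snd w)))"
  have gb: "g \<in> borel_measurable borel"
  proof -
    have "g \<in> borel_measurable (borel \<Otimes>\<^sub>M borel)" unfolding g_def by measurable
    then show ?thesis by (simp only: borel_prod)
  qed
  have toN: "h \<in> borel_measurable \<nu>" if "h \<in> borel_measurable borel" for h :: "'a \<Rightarrow> ennreal"
    using that by (simp add: measurable_cong_sets[OF sN refl])
  have toM: "h \<in> borel_measurable \<mu>" if "h \<in> borel_measurable borel" for h :: "'a \<Rightarrow> ennreal"
    using that by (simp add: measurable_cong_sets[OF sM refl])
  have ix: "(\<integral>\<^sup>+x. ennreal (indicator (ball z \<delta>) x / m z) \<partial>\<nu>) = 1" if z: "z \<in> Z" for z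
  proof -
    have "(\<integral>\<^sup>+x. ennreal (indicator (ball z \<delta>) x / m z) \<partial>\<nu>) = (\<integral>\<^sup>+x. ennreal (1 / m z) * indicator (ball z \<delta>) x \<partial>\<nu>)"
      by (intro nn_integral_cong) (auto simp: indicator_def)
    also have "\<dots> = ennreal (1 / m z) * emeasure \<nu> (ball z \<delta>)"
      using sN by (intro nn_integral_cmult_indicator) (simp add: borel_open)
    also have "\<dots> = 1" using mem[OF z] mpos[OF z] by (simp add: ennreal_mult[symmetric])
    finally show ?thesis .
  qed
  have gs: "(\<integral>\<^sup>+x. g (x,y) \<partial>\<nu>) = 1" for y
  proof -
    have m1: "(\<lambda>x. ennreal (a z y) * ennreal (indicator (ball z \<delta>) x / m z)) \<in> borel_measurable \<nu>" for z
      by (intro toN) measurable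
    have "(\<integral>\<^sup>+x. g (x,y) \<partial>\<nu>) = (\<integral>\<^sup>+x. (\<Sum>z\<in>Z. ennreal (a z y) * ennreal (indicator (ball z \<delta>) x / m z)) \<partial>\<nu>)
        + (\<integral>\<^sup>+x. ennreal (indicator (UNIV - W) y) \<partial>\<nu>)"
      unfolding g_def using m1 by (subst nn_integral_add) auto
    also have "(\<integral>\<^sup>+x. ennreal (indicator (UNIV - W) y) \<partial>\<nu>) = ennreal (indicator (UNIV - W) y)"
      by (simp add: M1.emeasure_space_1)
    also have "(\<integral>\<^sup>+x. (\<Sum>z\<in>Z. ennreal (a z y) * ennreal (indicator (ball z \<delta>) x / m z)) \<partial>\<nu>)
        = (\<Sum>z\<in>Z. (\<integral>\<^sup>+x. ennreal (a z y) * ennreal (indicator (ball z \<delta>) x / m z) \<partial>\<nu>))"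
      using m1 by (intro nn_integral_sum) auto
    also have "\<dots> = (\<Sum>z\<in>Z. ennreal (a z y))"
    proof (rule sum.cong[OF refl])
      fix z assume z: "z \<in> Z"
      have "(\<integral>\<^sup>+x. ennreal (a z y) * ennreal (indicator (ball z \<delta>) x / m z) \<partial>\<nu>) = ennreal (a z y) * (\<integral>\<^sup>+x. ennreal (indicator (ball z \<delta>) x / m z) \<partial>\<nu>)"
        by (rule nn_integral_cmult) (intro toN, measurable)
      then show "(\<integral>\<^sup>+x. ennreal (a z y) * ennreal (indicator (ball z \<delta>) x / m z) \<partial>\<nu>) = ennreal (a z y)"
        using ix[OF z] by simp
    qed
    also have "\<dots> = ennreal (indicator W y)" using a0 asum by (simp add: sum_ennreal)
    also have "ennreal (indicator W y) + ennreal (indicator (UNIV - W) y) = 1"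
      by (cases "y \<in> W") auto
    finally show ?thesis .
  qed
  define f where "f x = (\<integral>\<^sup>+y. g (x,y) \<partial>\<mu>)" for x
  define q where "q = density \<nu> f"
  define \<gamma> where "\<gamma> = density (\<nu> \<Otimes>\<^sub>M \<mu>) g"
  have cpl: "\<gamma> \<in> couplings q \<mu>"
    unfolding \<gamma>_def q_def f_def by (rule coupling_density[OF sN sM pN pM gb gs])
  define Cg where "Cg = (\<Sum>z\<in>Z. 1 / m z) + 1"
  have gle: "g w \<le> ennreal Cg" for w
  proof -
    have t: "ennreal (a z (snd w)) * ennreal (indicator (ball z \<delta>) (fst w) / m z) \<le> ennreal (1 / m z)" if z: "z \<in> Z" for z
    proof -
      have "indicator (ball z \<delta>) (fst w) / m z \<le> 1 / m z"
        using mpos[OF z] by (intro divide_right_mono) (auto simp: indicator_def)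
      moreover have "0 \<le> indicator (ball z \<delta>) (fst w) / m z" using mpos[OF z] by simp
      ultimately have "a z (snd w) * (indicator (ball z \<delta>) (fst w) / m z) \<le> 1 * (1 / m z)"
        using a0[OF z] a1[OF z] by (intro mult_mono) auto
      then have "ennreal (a z (snd w) * (indicator (ball z \<delta>) (fst w) / m z)) \<le> ennreal (1 / m z)"
        by (intro ennreal_leI) simp
      moreover have "ennreal (a z (snd w) * (indicator (ball z \<delta>) (fst w) / m z)) = ennreal (a z (snd w)) * ennreal (indicator (ball z \<delta>) (fst w) / m z)"
        using a0[OF z] mpos[OF z] by (intro ennreal_mult) auto
      ultimately show ?thesis by simp
    qed
    have "g w \<le> (\<Sum>z\<in>Z. ennreal (1 / m z)) + ennreal 1"
      unfolding g_def by (intro add_mono sum_mono t) (auto simp: indicator_def)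
    also have "\<dots> = ennreal (\<Sum>z\<in>Z. 1 / m z) + ennreal 1" using mpos
      by (subst sum_ennreal) (auto simp: less_imp_le)
    also have "\<dots> = ennreal Cg" unfolding Cg_def using mpos
      by (intro ennreal_plus[symmetric]) (auto intro!: sum_nonneg simp: less_imp_le)
    finally show ?thesis .
  qed
  have fm: "f \<in> borel_measurable borel"
  proof -
    have "g \<in> borel_measurable (borel \<Otimes>\<^sub>M \<mu>)"
      using gb by (simp add: measurable_cong_sets[OF sets_pair_borel[OF refl sM] refl])
    then have "(\<lambda>(x,y). g (x,y)) \<in> borel_measurable (borel \<Otimes>\<^sub>M \<mu>)" by simp
    from M2.borel_measurable_nn_integral[OF this] show ?thesis unfolding f_def by simp
  qed
  have fle: "f x \<le> ennreal Cg" for x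
  proof -
    have "f x \<le> (\<integral>\<^sup>+y. ennreal Cg \<partial>\<mu>)" unfolding f_def by (intro nn_integral_mono gle)
    then show ?thesis by (simp add: M2.emeasure_space_1)
  qed
  have sg: "sets \<gamma> = sets borel" and d1: "distr \<gamma> borel fst = q" and pg: "prob_space \<gamma>"
    using cpl by (auto simp: couplings_def)
  have mf: "fst \<in> measurable \<gamma> borel"
    using measurable_fst[of "borel::'a measure" "borel::'a measure"] by (simp add: borel_prod measurable_cong_sets[OF sg refl])
  have pq: "prob_space q"
    using prob_space.prob_space_distr[OF pg mf] d1 by simp
  have qQ: "q \<in> Qinf \<nu>"
    unfolding Qinf_def using pq fm fle q_def by blast
  have qW: "q \<in> Wspace p"
  proof -
    have sq: "sets q = sets borel" unfolding q_def using sN by simp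
    have nm: "(\<lambda>x. ennreal (norm x powr p)) \<in> borel_measurable \<nu>" by (intro toN) measurable
    have "(\<integral>\<^sup>+ x. ennreal (norm x powr p) \<partial>q) = (\<integral>\<^sup>+ x. f x * ennreal (norm x powr p) \<partial>\<nu>)"
      unfolding q_def using fm nm by (intro nn_integral_density) (auto intro: toN)
    also have "\<dots> \<le> (\<integral>\<^sup>+ x. ennreal Cg * ennreal (norm x powr p) \<partial>\<nu>)"
      by (intro nn_integral_mono mult_right_mono fle) auto
    also have "\<dots> = ennreal Cg * (\<integral>\<^sup>+ x. ennreal (norm x powr p) \<partial>\<nu>)"
      using nm by (rule nn_integral_cmult)
    also have "\<dots> < \<infinity>" using momN by (simp add: ennreal_mult_less_top)
    finally show ?thesis unfolding Wspace_def using sq pq by simp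
  qed
  have gm: "g \<in> borel_measurable (\<nu> \<Otimes>\<^sub>M \<mu>)"
    using gb by (simp add: measurable_cong_sets[OF sP refl])
  define D where "D = ennreal ((2 * \<delta>) powr p)"
  have pw: "g w * c w \<le> D * g w + ennreal (indicator (UNIV - W) (snd w)) * c w" for w
  proof -
    obtain x y where w: "w = (x, y)" by (cases w)
    define T where "T z = ennreal (a z y) * ennreal (indicator (ball z \<delta>) x / m z)" for z
    have Tc: "T z * c w \<le> D * T z" if z: "z \<in> Z" for z
    proof (cases "a z y = 0 \<or> x \<notin> ball z \<delta>")
      case True
      then have "T z = 0" unfolding T_def by auto
      then show ?thesis by simp
    next
      case False
      then have xy: "x \<in> ball z \<delta>" "y \<in> ball z \<delta>" using aball[OF z] by auto
      have "norm (x - y) \<le> dist x z + dist z y"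
        by (metis dist_norm dist_triangle)
      also have "\<dots> < 2 * \<delta>" using xy by (simp add: dist_commute)
      finally have "norm (x - y) powr p \<le> (2 * \<delta>) powr p" using p by (intro powr_mono2) auto
      then have "c w \<le> D" unfolding c_def D_def w by (intro ennreal_leI) simp
      then have "T z * c w \<le> T z * D" by (rule mult_left_mono) simp
      then show ?thesis by (simp add: mult.commute)
    qed
    have "g w * c w = (\<Sum>z\<in>Z. T z) * c w + ennreal (indicator (UNIV - W) (snd w)) * c w"
      unfolding g_def T_def w by (simp add: distrib_right)
    also have "(\<Sum>z\<in>Z. T z) * c w = (\<Sum>z\<in>Z. T z * c w)" by (rule sum_distrib_right)
    also have "\<dots> \<le> (\<Sum>z\<in>Z. D * T z)" by (intro sum_mono Tc)
    also have "\<dots> = D * (\<Sum>z\<in>Z. T z)" by (simp add: sum_distrib_left)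
    also have "\<dots> \<le> D * g w" unfolding g_def T_def w by (intro mult_left_mono) auto
    finally show ?thesis by (simp add: add_right_mono)
  qed
  have intg: "(\<integral>\<^sup>+ w. g w \<partial>(\<nu> \<Otimes>\<^sub>M \<mu>)) = 1"
  proof -
    have "(\<integral>\<^sup>+ w. g w \<partial>(\<nu> \<Otimes>\<^sub>M \<mu>)) = (\<integral>\<^sup>+ y. (\<integral>\<^sup>+ x. g (x,y) \<partial>\<nu>) \<partial>\<mu>)"
      using nn_integral_snd[OF gm] by simp
    also have "\<dots> = 1" by (simp add: gs M2.emeasure_space_1)
    finally show ?thesis .
  qed
  have im: "(\<lambda>w. ennreal (indicator (UNIV - W) (snd w)) * c w) \<in> borel_measurable (\<nu> \<Otimes>\<^sub>M \<mu>)"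
  proof -
    have "(\<lambda>w::'a\<times>'a. ennreal (indicator (UNIV - W) (snd w)) * ennreal (norm (fst w - snd w) powr p)) \<in> borel_measurable (borel \<Otimes>\<^sub>M borel)"
      by measurable
    then show ?thesis unfolding c_def by (simp add: measurable_cong_sets[OF sP refl] borel_prod)
  qed
  have rest: "(\<integral>\<^sup>+ w. ennreal (indicator (UNIV - W) (snd w)) * c w \<partial>(\<nu> \<Otimes>\<^sub>M \<mu>))
      \<le> (\<integral>\<^sup>+y. \<phi> y * indicator (UNIV - cball 0 R) y \<partial>\<mu>)"
  proof -
    have "(\<integral>\<^sup>+ w. ennreal (indicator (UNIV - W) (snd w)) * c w \<partial>(\<nu> \<Otimes>\<^sub>M \<mu>))
        = (\<integral>\<^sup>+ y. (\<integral>\<^sup>+ x. ennreal (indicator (UNIV - W) y) * ennreal (norm (x - y) powr p) \<partial>\<nu>) \<partial>\<mu>)"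
      using nn_integral_snd[OF im] by (simp add: c_def)
    also have "\<dots> = (\<integral>\<^sup>+ y. ennreal (indicator (UNIV - W) y) * \<phi> y \<partial>\<mu>)"
      unfolding \<phi>_def by (intro nn_integral_cong nn_integral_cmult) (intro toN, measurable)
    also have "\<dots> \<le> (\<integral>\<^sup>+y. \<phi> y * indicator (UNIV - cball 0 R) y \<partial>\<mu>)"
    proof (rule nn_integral_mono_AE)
      have "UNIV - supp \<mu> \<in> null_sets \<mu>"
        using supp_null[OF sM] supp_closed[of \<mu>] sM by (simp add: null_sets_def borel_open open_Diff)
      from AE_not_in[OF this] show "AE y in \<mu>. ennreal (indicator (UNIV - W) y) * \<phi> y \<le> \<phi> y * indicator (UNIV - cball 0 R) y"
      proof (rule AE_mp, intro AE_I2 impI)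
        fix y assume "y \<notin> UNIV - supp \<mu>"
        then have ys: "y \<in> supp \<mu>" by simp
        show "ennreal (indicator (UNIV - W) y) * \<phi> y \<le> \<phi> y * indicator (UNIV - cball 0 R) y"
        proof (cases "y \<in> W")
          case False
          have "y \<notin> cball 0 R"
          proof
            assume "y \<in> cball 0 R"
            then have "y \<in> K" using ys unfolding K_def by simp
            then show False using False Z(3) \<open>y \<in> cball 0 R\<close> unfolding W_def by auto
          qed
          then show ?thesis using False by (simp add: mult.commute)
        qed simp
      qed
    qed
    finally show ?thesis .
  qed
  have Dle: "(2 * \<delta>) powr p \<le> e powr p / 2"
  proof -
    have "2 * \<delta> = e / 2" unfolding \<delta>_def by simp
    then have "(2 * \<delta>) powr p = (e / 2) powr p" by (rule arg_cong)
    also have "\<dots> = e powr p / 2 powr p" using e by (simp add: powr_divide)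
    also have "2 powr p \<ge> 2" using powr_mono[OF p, of 2] by simp
    then have "e powr p / 2 powr p \<le> e powr p / 2" using ep by (intro divide_left_mono) auto
    finally show ?thesis .
  qed
  have cost: "(\<integral>\<^sup>+ z. ennreal (norm (fst z - snd z) powr p) \<partial>\<gamma>) < ennreal (e powr p)"
  proof -
    have "(\<integral>\<^sup>+ z. ennreal (norm (fst z - snd z) powr p) \<partial>\<gamma>) = (\<integral>\<^sup>+ w. g w * c w \<partial>(\<nu> \<Otimes>\<^sub>M \<mu>))"
      unfolding \<gamma>_def using gm cm by (subst nn_integral_density) (auto simp: c_def)
    also have "\<dots> \<le> (\<integral>\<^sup>+ w. D * g w + ennreal (indicator (UNIV - W) (snd w)) * c w \<partial>(\<nu> \<Otimes>\<^sub>M \<mu>))"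
      by (intro nn_integral_mono pw)
    also have "\<dots> = D * (\<integral>\<^sup>+ w. g w \<partial>(\<nu> \<Otimes>\<^sub>M \<mu>)) + (\<integral>\<^sup>+ w. ennreal (indicator (UNIV - W) (snd w)) * c w \<partial>(\<nu> \<Otimes>\<^sub>M \<mu>))"
      using gm im by (subst nn_integral_add) (auto simp: nn_integral_cmult)
    also have "\<dots> \<le> D + (\<integral>\<^sup>+y. \<phi> y * indicator (UNIV - cball 0 R) y \<partial>\<mu>)"
      using rest intg by (simp add: add_left_mono)
    also have "\<dots> < ennreal (e powr p)"
    proof -
      let ?X = "(\<integral>\<^sup>+y. \<phi> y * indicator (UNIV - cball 0 R) y \<partial>\<mu>)"
      have "?X < top" using R by (rule order.strict_trans) simp
      then have Xf: "?X = ennreal (enn2real ?X)" by (intro ennreal_enn2real[symmetric]) auto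
      have "enn2real ?X < e powr p / 2"
      proof -
        from R have "ennreal (enn2real ?X) < ennreal (e powr p / 2)" by (subst Xf[symmetric])
        then show ?thesis by (simp add: ennreal_less_iff[OF enn2real_nonneg])
      qed
      then have "(2 * \<delta>) powr p + enn2real ?X < e powr p" using Dle by simp
      then have "ennreal ((2 * \<delta>) powr p + enn2real ?X) < ennreal (e powr p)"
        using ep by (intro ennreal_lessI) auto
      then show ?thesis unfolding D_def using Xf by (metis enn2real_nonneg ennreal_plus powr_ge_zero)
    qed
    finally show ?thesis .
  qed
  have "Wdist p q \<mu> < e"
  proof -
    let ?I = "(INF \<gamma>\<in>couplings q \<mu>. \<integral>\<^sup>+ z. ennreal (norm (fst z - snd z) powr p) \<partial>\<gamma>)"
    have "?I \<le> (\<integral>\<^sup>+ z. ennreal (norm (fst z - snd z) powr p) \<partial>\<gamma>)" using cpl by (rule INF_lower)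
    then have Il: "?I < ennreal (e powr p)" using cost by simp
    have "?I < top" using Il by (rule order.strict_trans) simp
    then have If: "?I = ennreal (enn2real ?I)" by (intro ennreal_enn2real[symmetric]) auto
    from Il have "ennreal (enn2real ?I) < ennreal (e powr p)" by (subst If[symmetric])
    then have "enn2real ?I < e powr p" by (simp add: ennreal_less_iff[OF enn2real_nonneg])
    then have "enn2real ?I powr (1/p) < (e powr p) powr (1/p)"
      using p by (intro powr_less_mono2) auto
    also have "(e powr p) powr (1/p) = e" using p e by (simp add: powr_powr)
    finally show ?thesis unfolding Wdist_def .
  qed
  then show ?thesis using qQ qW by blast
qed


theorem theorem8:
  fixes \<nu> :: "'a::euclidean_space measure" and p :: real
  assumes "p \<ge> 1" and "\<nu> \<in> Wspace p"
  shows "Wclosure p (Qinf \<nu>) = {\<mu> \<in> Wspace p. supp \<mu> \<subseteq> supp \<nu>}"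
proof
  show "Wclosure p (Qinf \<nu>) \<subseteq> {\<mu> \<in> Wspace p. supp \<mu> \<subseteq> supp \<nu>}"
    using closure_sub[OF assms] by (auto simp: Wclosure_def)
  show "{\<mu> \<in> Wspace p. supp \<mu> \<subseteq> supp \<nu>} \<subseteq> Wclosure p (Qinf \<nu>)"
    using approx[OF assms] unfolding Wclosure_def by blast
qed

end
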